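(* Let $f:\{0,1\}^n\to\{0,1\}^m$ be a Boolean function which is either constant or balanced, and suppose $\mathbf{0}\in f(\{0,1\}^n)$. For each $i=0,\dots,m-1$ run the algorithm $\mathrm{GPK}(\mathbf{e}_i)$ and let $\delta_i\in\{0,1\}^n$ be its output. If $f$ is constant, then with certainty $\delta_i=\mathbf{0}$ for all $i$; if $f$ is balanced, then with certainty $\delta_i\neq\mathbf{0}$ for at least one $i$. Consequently, deciding "constant" if all $\delta_i=\mathbf{0}$ and "balanced" otherwise is always correct.
   Context: A function $f:\{0,1\}^n\to\{0,1\}^m$ is constant if $f(\mathbf{x})$ is the same for all $\mathbf{x}$, and balanced if it takes exactly two distinct values, each on exactly half of the inputs. Bits are indexed from the right starting at $0$ and $\mathbf{e}_i=0^{m-1-i}\,1\,0^{i}\in\{0,1\}^m$. For strings $\mathbf{y},\mathbf{z}$ of equal length, $\mathbf{y}\oplus\mathbf{z}$ is bitwise XOR and $\mathbf{y}\cdot\mathbf{z}=\bigoplus_j y_jz_j$. $\mathbf{U}_f$ is the unitary with $\mathbf{U}_f(\ket{\mathbf{x}}_n\otimes\ket{\mathbf{z}}_m)=\ket{\mathbf{x}}_n\otimes\ket{\mathbf{z}\oplus f(\mathbf{x})}_m$; $\mathbf{H}_k=\mathbf{H}^{\otimes k}$ with $\mathbf{H}$ the one-qubit Hadamard gate. The algorithm $\mathrm{GPK}(\mathbf{y})$ for $\mathbf{y}\in\{0,1\}^m$: start in $\ket{\mathbf{0}}_n\otimes\ket{\mathbf{0}}_m$; apply Pauli $\mathbf{X}$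 gates to get $\ket{\mathbf{0}}_n\otimes\ket{\mathbf{y}}_m$; apply $\mathbf{H}_{n+m}$; apply $\mathbf{U}_f$; apply $\mathbf{H}_n$ to the first register; measure the first register in the computational basis, giving the output in $\{0,1\}^n$. *)

theory Defs
  imports Complex_Main
begin

text \<open>A bit string of length k is encoded as a natural number below 2^k;
bit i (indexed from the right, starting at 0) is bit b i. A function
f : {0,1}^n -> {0,1}^m is a function nat => nat with f x < 2^m for x < 2^n.
An (n+m)-qubit state is a function nat => complex giving the amplitude of each
computational basis state b < 2^(n+m); the basis state |x>_n (x) |z>_m is
b = x * 2^m + z, i.e. the first register occupies the high n qubits
(qubits m .. m+n-1) and the second register the low m qubits (0 .. m-1).\<close>

definition is_constant :: "nat \<Rightarrow> (nat \<Rightarrow> nat) \<Rightarrow> bool" where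
  "is_constant n f \<longleftrightarrow> (\<exists>c. \<forall>x<2^n. f x = c)"

definition is_balanced :: "nat \<Rightarrow> (nat \<Rightarrow> nat) \<Rightarrow> bool" where
  "is_balanced n f \<longleftrightarrow> (\<exists>a b. a \<noteq> b \<and> f ` {..<2^n} = {a, b}
      \<and> 2 * card {x. x < 2^n \<and> f x = a} = 2^n
      \<and> 2 * card {x. x < 2^n \<and> f x = b} = 2^n)"

definition unit_vec :: "nat \<Rightarrow> nat" where
  "unit_vec i = 2 ^ i"

definition ket0 :: "nat \<Rightarrow> complex" where
  "ket0 b = (if b = 0 then 1 else 0)"

definition X_gate :: "nat \<Rightarrow> (nat \<Rightarrow> complex) \<Rightarrow> (nat \<Rightarrow> complex)" where
  "X_gate j \<psi> = (\<lambda>b. \<psi> (flip_bit j b))"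

definition H_gate :: "nat \<Rightarrow> (nat \<Rightarrow> complex) \<Rightarrow> (nat \<Rightarrow> complex)" where
  "H_gate j \<psi> = (\<lambda>b. (\<psi> (unset_bit j b) + (if bit b j then -1 else 1) * \<psi> (set_bit j b))
                      / complex_of_real (sqrt 2))"

definition apply_each :: "(nat \<Rightarrow> (nat \<Rightarrow> complex) \<Rightarrow> (nat \<Rightarrow> complex)) \<Rightarrow> nat list
    \<Rightarrow> (nat \<Rightarrow> complex) \<Rightarrow> (nat \<Rightarrow> complex)" where
  "apply_each G js \<psi> = fold G js \<psi>"

text \<open>U_f (|x>_n (x) |z>_m) = |x>_n (x) |z xor f(x)>_m\<close>
definition U_f :: "nat \<Rightarrow> nat \<Rightarrow> (nat \<Rightarrow> nat) \<Rightarrow> (nat \<Rightarrow> complex) \<Rightarrow> (nat \<Rightarrow> complex)" where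
  "U_f n m f \<psi> = (\<lambda>b. if b < 2^(n+m)
      then \<psi> (drop_bit m b * 2^m + xor (take_bit m b) (f (drop_bit m b)))
      else \<psi> b)"

definition GPK_state :: "nat \<Rightarrow> nat \<Rightarrow> (nat \<Rightarrow> nat) \<Rightarrow> nat \<Rightarrow> (nat \<Rightarrow> complex)" where
  "GPK_state n m f y =
     (let \<psi>1 = apply_each X_gate (filter (\<lambda>j. bit y j) [0..<m]) ket0;
          \<psi>2 = apply_each H_gate [0..<n+m] \<psi>1;
          \<psi>3 = U_f n m f \<psi>2;
          \<psi>4 = apply_each H_gate [m..<m+n] \<psi>3
      in \<psi>4)"

definition GPK_prob :: "nat \<Rightarrow> nat \<Rightarrow> (nat \<Rightarrow> nat) \<Rightarrow> nat \<Rightarrow> nat \<Rightarrow> real" where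
  "GPK_prob n m f y d = (\<Sum>z<2^m. (cmod (GPK_state n m f y (d * 2^m + z)))\<^sup>2)"

end

theory Submission imports Defs begin

lemma drop_unset: "drop_bit m (unset_bit (m+j) (b::nat)) = unset_bit j (drop_bit m b)"
  by (rule bit_eqI) (auto simp: bit_drop_bit_eq bit_unset_bit_iff ac_simps)
lemma drop_set: "drop_bit m (set_bit (m+j) (b::nat)) = set_bit j (drop_bit m b)"
  by (rule bit_eqI) (auto simp: bit_drop_bit_eq bit_set_bit_iff ac_simps)
lemma take_unset: "take_bit m (unset_bit (m+j) (b::nat)) = take_bit m b"
  by (rule bit_eqI) (auto simp: bit_take_bit_iff bit_unset_bit_iff)
lemma take_set: "take_bit m (set_bit (m+j) (b::nat)) = take_bit m b"
  by (rule bit_eqI) (auto simp: bit_take_bit_iff bit_set_bit_iff)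

definition L :: "nat \<Rightarrow> (nat \<Rightarrow> complex) \<Rightarrow> (nat \<Rightarrow> complex) \<Rightarrow> nat \<Rightarrow> complex" where
  "L m g h = (\<lambda>b. g (drop_bit m b) * h (take_bit m b))"

lemma H_L: "H_gate (m+j) (L m g h) = L m (H_gate j g) h"
  unfolding H_gate_def L_def drop_unset drop_set take_unset take_set
  by (rule ext) (simp add: bit_drop_bit_eq add.commute[of m j] algebra_simps)

lemma fold_H_L: "fold H_gate (map (\<lambda>j. j + m) js) (L m g h) = L m (fold H_gate js g) h"
  by (induction js arbitrary: g) (simp_all add: H_L[of m, simplified add.commute[of m]] add.commute)

lemma HS: "take_bit k b = 0 \<Longrightarrow> fold H_gate [0..<k] g b = (\<Sum>c<2^k. g (b+c)) / complex_of_real (sqrt 2) ^ k"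
proof (induction k arbitrary: b)
  case 0 then show ?case by simp
next
  case (Suc k)
  have nb: "\<not> bit b k" proof -
    have "bit (take_bit (Suc k) b) k = bit b k" by (simp add: bit_take_bit_iff)
    then show ?thesis using Suc.prems by simp
  qed
  have t: "take_bit k b = 0" proof -
    have "take_bit k (take_bit (Suc k) b) = take_bit k b" by (simp add: take_bit_take_bit)
    then show ?thesis using Suc.prems by simp
  qed
  have t2: "take_bit k (b + 2^k) = 0" using t by (simp add: take_bit_eq_mod mod_add_right_eq[symmetric])
  have us1: "unset_bit k b = b" using nb by (auto intro: bit_eqI simp: bit_unset_bit_iff)
  have us2: "set_bit k b = b + 2^k" using nb by (simp add: set_bit_eq)
  note us = us1 us2
  have sp: "(\<Sum>c<2^Suc k. g (b+c)) = (\<Sum>c<2^k. g (b+c)) + (\<Sum>c<2^k. g (b+2^k+c))"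
  proof -
    have U: "{..<(2::nat)^Suc k} = {..<2^k} \<union> {2^k..<2^k+2^k}" by (auto simp: power_Suc)
    have D: "{..<(2::nat)^k} \<inter> {2^k..<2^k+2^k} = {}" by auto
    have "(\<Sum>c\<in>{0+2^k..<2^k+2^k}. g (b+c)) = (\<Sum>c\<in>{0..<2^k}. g (b+(c+2^k)))"
      by (rule sum.shift_bounds_nat_ivl)
    also have "\<dots> = (\<Sum>c<2^k. g (b+2^k+c))"
      unfolding lessThan_atLeast0 by (rule sum.cong) (simp_all add: algebra_simps)
    finally have S2: "(\<Sum>c\<in>{2^k..<2^k+2^k}. g (b+c)) = (\<Sum>c<2^k. g (b+2^k+c))" by simp
    show ?thesis unfolding U by (simp only: sum.union_disjoint[OF finite_lessThan finite_atLeastLessThan D] S2)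
  qed
  let ?r = "complex_of_real (sqrt 2)"
  have "fold H_gate [0..<Suc k] g b = (fold H_gate [0..<k] g b + fold H_gate [0..<k] g (b + 2^k)) / ?r"
    by (simp add: H_gate_def us nb)
  also have "\<dots> = ((\<Sum>c<2^k. g (b+c)) / ?r^k + (\<Sum>c<2^k. g (b+2^k+c)) / ?r^k) / ?r"
    by (simp only: Suc.IH[OF t] Suc.IH[OF t2] add.assoc)
  also have "\<dots> = ((\<Sum>c<2^k. g (b+c)) + (\<Sum>c<2^k. g (b+2^k+c))) / (?r * ?r^k)"
    by (simp only: add_divide_distrib[symmetric] divide_divide_eq_left mult.commute)
  also have "\<dots> = (\<Sum>c<2^Suc k. g (b+c)) / ?r ^ Suc k"
    unfolding sp by (simp only: power_Suc)
  finally show ?case .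
qed

lemma drop_eq_Suc: "(drop_bit k (c::nat) = drop_bit k y) \<longleftrightarrow>
   (drop_bit (Suc k) c = drop_bit (Suc k) y \<and> bit c k = bit y k)"
proof -
  have "(drop_bit k (c::nat) = drop_bit k y) \<longleftrightarrow> (\<forall>n. bit c (k+n) = bit y (k+n))"
    by (simp add: bit_eq_iff bit_drop_bit_eq ac_simps)
  also have "\<dots> \<longleftrightarrow> (\<forall>n. bit c (Suc k+n) = bit y (Suc k+n)) \<and> bit c k = bit y k"
    by (metis add.right_neutral add_Suc_shift not0_implies_Suc)
  also have "\<dots> \<longleftrightarrow> (drop_bit (Suc k) c = drop_bit (Suc k) y \<and> bit c k = bit y k)"
    by (simp add: bit_eq_iff bit_drop_bit_eq ac_simps)
  finally show ?thesis .
qed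

lemma drop_Suc_unset: "drop_bit (Suc k) (unset_bit k (b::nat)) = drop_bit (Suc k) b"
  by (rule bit_eqI) (auto simp: bit_drop_bit_eq bit_unset_bit_iff)
lemma drop_Suc_set: "drop_bit (Suc k) (set_bit k (b::nat)) = drop_bit (Suc k) b"
  by (rule bit_eqI) (auto simp: bit_drop_bit_eq bit_set_bit_iff)

lemma prod_cong_unset: "(\<Prod>j<k. if bit (unset_bit k (b::nat)) j \<and> bit y j then -1 else (1::complex)) =
   (\<Prod>j<k. if bit b j \<and> bit y j then -1 else 1)"
  by (rule prod.cong) (auto simp: bit_unset_bit_iff)
lemma prod_cong_set: "(\<Prod>j<k. if bit (set_bit k (b::nat)) j \<and> bit y j then -1 else (1::complex)) =
   (\<Prod>j<k. if bit b j \<and> bit y j then -1 else 1)"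
  by (rule prod.cong) (auto simp: bit_set_bit_iff)

lemma HD: "fold H_gate [0..<k] (\<lambda>b. if b = y then 1 else 0) =
  (\<lambda>b. if drop_bit k b = drop_bit k y
        then (\<Prod>j<k. if bit b j \<and> bit y j then -1 else 1) / complex_of_real (sqrt 2) ^ k else 0)"
proof (induction k)
  case 0 then show ?case by (simp add: fun_eq_iff)
next
  case (Suc k)
  show ?case
  proof (rule ext)
    fix b
    show "fold H_gate [0..<Suc k] (\<lambda>b. if b = y then 1 else 0) b = (if drop_bit (Suc k) b = drop_bit (Suc k) y
        then (\<Prod>j<Suc k. if bit b j \<and> bit y j then -1 else 1) / complex_of_real (sqrt 2) ^ Suc k else 0)"
      by (simp add: Suc.IH H_gate_def drop_eq_Suc[of k] drop_Suc_unset drop_Suc_set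
          prod_cong_unset prod_cong_set bit_unset_bit_iff bit_set_bit_iff)
  qed
qed

lemma psi1: "i < m \<Longrightarrow> apply_each X_gate (filter (\<lambda>j. bit (unit_vec i) j) [0..<m]) ket0
   = (\<lambda>b. if b = 2^i then 1 else 0)"
proof -
  assume im: "i < m"
  have "[0..<m] = [0..<i] @ i # [Suc i..<m]" using im
    using upt_add_eq_append[of 0 i "m - i"] upt_conv_Cons[of i m] by simp
  then have "filter (\<lambda>j. bit (unit_vec i) j) [0..<m] = [i]"
    by (simp add: unit_vec_def bit_exp_iff filter_empty_conv)
  moreover have "flip_bit i b = 0 \<longleftrightarrow> b = 2^i" for b :: nat
    by (auto simp: bit_eq_iff bit_flip_bit_iff bit_exp_iff)
  ultimately show ?thesis
    by (simp add: apply_each_def X_gate_def ket0_def fun_eq_iff)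
qed

lemma prod_single: "i < k \<Longrightarrow> (\<Prod>j<k. if bit (b::nat) j \<and> bit ((2::nat)^i) j then -1 else (1::complex))
   = (if bit b i then -1 else 1)"
proof -
  assume ik: "i < k"
  have "(\<Prod>j<k. if bit (b::nat) j \<and> bit ((2::nat)^i) j then -1 else (1::complex))
     = (\<Prod>j<k. if j = i then (if bit b i then -1 else 1) else 1)"
    by (rule prod.cong) (auto simp: bit_exp_iff)
  also have "\<dots> = (if bit b i then -1 else 1)" using ik by (simp add: prod.delta)
  finally show ?thesis .
qed

lemma psi2: "i < m \<Longrightarrow> fold H_gate [0..<n+m] (\<lambda>b. if b = 2^i then 1 else 0) =
   (\<lambda>b. if drop_bit (n+m) b = 0 then (if bit b i then -1 else 1) / complex_of_real (sqrt 2) ^ (n+m) else 0)"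
proof -
  assume im: "i < m"
  have "(2::nat)^i < 2^(n+m)" using im by simp
  then have "drop_bit (n+m) ((2::nat)^i) = 0" by (simp add: drop_bit_eq_div)
  then show ?thesis using im by (simp add: HD prod_single fun_eq_iff)
qed

lemma psi3:
  assumes im: "i < m" and range: "\<forall>x<2^n. f x < 2^m"
  shows "U_f n m f (\<lambda>b. if drop_bit (n+m) b = 0 then (if bit b i then -1 else 1) / complex_of_real (sqrt 2) ^ (n+m) else 0)
    = L m (\<lambda>x. if x < 2^n then (if bit (f x) i then -1 else 1) else 0)
          (\<lambda>z. (if bit z i then -1 else 1) / complex_of_real (sqrt 2) ^ (n+m))"
proof (rule ext)
  fix b :: nat
  define x where "x = drop_bit m b"
  show "U_f n m f (\<lambda>b. if drop_bit (n+m) b = 0 then (if bit b i then -1 else 1) / complex_of_real (sqrt 2) ^ (n+m) else 0) b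
    = L m (\<lambda>x. if x < 2^n then (if bit (f x) i then -1 else 1) else 0)
          (\<lambda>z. (if bit z i then -1 else 1) / complex_of_real (sqrt 2) ^ (n+m)) b"
  proof (cases "b < 2^(n+m)")
    case True
    have xl: "x < 2^n" using True unfolding x_def drop_bit_eq_div
      by (simp add: less_mult_imp_div_less power_add)
    define w where "w = xor (take_bit m b) (f x)"
    have fx: "take_bit m (f x) = f x" using range xl by (simp add: take_bit_nat_eq_self_iff)
    have ww: "w = take_bit m (xor b (f x))" unfolding w_def by (metis fx take_bit_xor)
    have wl: "w < 2^m" unfolding ww by (rule take_bit_nat_less_exp)
    define idx where "idx = x * 2^m + w"
    have "idx < x * 2^m + 2^m" using wl idx_def by simp
    also have "\<dots> = (x+1) * 2^m" by simp
    also have "\<dots> \<le> 2^n * 2^m" using xl by (intro mult_right_mono) auto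
    finally have il: "idx < 2^(n+m)" by (simp add: power_add)
    have d0: "drop_bit (n+m) idx = 0" using il by (simp add: drop_bit_eq_div)
    have ti: "take_bit m idx = w" unfolding idx_def take_bit_eq_mod using wl by simp
    have bi: "bit idx i = (bit b i \<noteq> bit (f x) i)"
    proof -
      have "bit idx i = bit (take_bit m idx) i" using im by (simp add: bit_take_bit_iff)
      also have "\<dots> = (bit b i \<noteq> bit (f x) i)" using im by (simp add: ti w_def bit_xor_iff bit_take_bit_iff)
      finally show ?thesis .
    qed
    have lhs: "U_f n m f (\<lambda>b. if drop_bit (n+m) b = 0 then (if bit b i then -1 else 1) / complex_of_real (sqrt 2) ^ (n+m) else 0) b
       = (if bit idx i then -1 else 1) / complex_of_real (sqrt 2) ^ (n+m)"
      using True d0 by (simp add: U_f_def idx_def w_def x_def)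
    have tb: "bit (take_bit m b) i = bit b i" using im by (simp add: bit_take_bit_iff)
    show ?thesis unfolding lhs bi using xl tb by (simp add: L_def x_def[symmetric])
  next
    case False
    then have "drop_bit (n+m) b \<noteq> 0" by (simp add: drop_bit_eq_div div_eq_0_iff)
    moreover have "\<not> x < 2^n" using False unfolding x_def drop_bit_eq_div
      by (simp add: power_add less_mult_imp_div_less div_less_iff_less_mult mult.commute)
    ultimately show ?thesis using False by (simp add: U_f_def L_def x_def)
  qed
qed

lemma state:
  assumes im: "i < m" and range: "\<forall>x<2^n. f x < 2^m" and zl: "z < 2^m"
  shows "GPK_state n m f (unit_vec i) z =
    (\<Sum>c<2^n. if bit (f c) i then -1 else 1) / complex_of_real (sqrt 2) ^ n
     * ((if bit z i then -1 else 1) / complex_of_real (sqrt 2) ^ (n+m))"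
proof -
  have ml: "[m..<m+n] = map (\<lambda>j. j+m) [0..<n]" by (simp add: map_add_upt add.commute)
  have "GPK_state n m f (unit_vec i) = L m (fold H_gate [0..<n] (\<lambda>x. if x < 2^n then (if bit (f x) i then -1 else 1) else 0))
          (\<lambda>z. (if bit z i then -1 else 1) / complex_of_real (sqrt 2) ^ (n+m))"
    unfolding GPK_state_def Let_def psi1[OF im] unfolding apply_each_def psi2[OF im] psi3[OF im range] ml fold_H_L ..
  moreover have "drop_bit m z = 0" "take_bit m z = z" using zl by (simp_all add: drop_bit_eq_div take_bit_nat_eq_self_iff)
  moreover have "fold H_gate [0..<n] (\<lambda>x. if x < 2^n then (if bit (f x) i then -1 else 1) else 0) 0
     = (\<Sum>c<2^n. if bit (f c) i then -1 else 1) / complex_of_real (sqrt 2) ^ n"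
    by (simp add: HS)
  ultimately show ?thesis by (simp add: L_def)
qed

lemma sq2: "(sqrt 2 ^ k)^2 = (2::real)^k"
proof -
  have "(sqrt 2 ^ k)^2 = (sqrt 2 ^ 2)^k" by (simp only: power_mult[symmetric] mult.commute)
  then show ?thesis by simp
qed

lemma prob:
  assumes im: "i < m" and range: "\<forall>x<2^n. f x < 2^m"
  shows "GPK_prob n m f (unit_vec i) 0 = (cmod (\<Sum>c<2^n. if bit (f c) i then -1 else (1::complex)))^2 / 4^n"
proof -
  let ?S = "cmod (\<Sum>c<2^n. if bit (f c) i then -1 else (1::complex))"
  have r: "cmod (complex_of_real (sqrt 2)) = sqrt 2" by simp
  have e: "(cmod (GPK_state n m f (unit_vec i) z))^2 = ?S^2 / 2^n / 2^(n+m)" if "z < 2^m" for z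
  proof -
    have "cmod (GPK_state n m f (unit_vec i) z) = ?S / sqrt 2 ^ n / sqrt 2 ^ (n+m)"
      unfolding state[OF im range that] by (simp add: norm_mult norm_divide norm_power)
    moreover have sq: "(sqrt 2 ^ k)^2 = (2::real)^k" for k
    proof -
      have "(sqrt 2 ^ k)^2 = (sqrt 2 ^ 2)^k" by (simp only: power_mult[symmetric] mult.commute)
      then show ?thesis by simp
    qed
    ultimately show ?thesis by (simp add: power_divide power_mult_distrib sq)
  qed
  have "GPK_prob n m f (unit_vec i) 0 = (\<Sum>z<(2::nat)^m. ?S^2 / 2^n / 2^(n+m))"
    unfolding GPK_prob_def by (rule sum.cong) (auto simp: e)
  also have "\<dots> = ?S^2 / 4^n" by (simp add: power_add field_simps flip: power_mult_distrib)
  finally show ?thesis .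
qed

lemma bal_sum:
  assumes img: "f ` {..<(2::nat)^n} = {0, v}" and v0: "v \<noteq> 0"
    and cA: "2 * card {x. x < 2^n \<and> f x = 0} = 2^n"
    and cB: "2 * card {x. x < 2^n \<and> f x = v} = 2^n"
    and bv: "bit v i"
  shows "(\<Sum>c<2^n. if bit (f c) i then -1 else (1::complex)) = 0"
proof -
  let ?A = "{x. x < 2^n \<and> f x = 0}" and ?B = "{x. x < (2::nat)^n \<and> f x = v}"
  have U: "{..<2^n} = ?A \<union> ?B" using img by auto
  have D: "?A \<inter> ?B = {}" using v0 by auto
  have fA: "finite ?A" "finite ?B" by auto
  have "(\<Sum>c<2^n. if bit (f c) i then -1 else (1::complex))
      = (\<Sum>c\<in>?A. if bit (f c) i then -1 else (1::complex)) + (\<Sum>c\<in>?B. if bit (f c) i then -1 else (1::complex))"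
    unfolding U by (rule sum.union_disjoint[OF fA D])
  also have "\<dots> = (\<Sum>c\<in>?A. 1) + (\<Sum>c\<in>?B. -1)"
    using bv by (intro arg_cong2[where f="(+)"] sum.cong) auto
  also have "\<dots> = of_nat (card ?A) - of_nat (card ?B)" by simp
  also have "\<dots> = 0"
  proof -
    have cc: "card ?A = card ?B" using cA cB by simp
    show ?thesis by (simp add: cc)
  qed
  finally show ?thesis .
qed

theorem theorem3p3:
  fixes n m :: nat and f :: "nat \<Rightarrow> nat"
  assumes range: "\<forall>x<2^n. f x < 2^m"
    and cb: "is_constant n f \<or> is_balanced n f"
    and zero: "0 \<in> f ` {..<2^n}"
  shows "(is_constant n f \<longrightarrow> (\<forall>i<m. GPK_prob n m f (unit_vec i) 0 = 1))
       \<and> (is_balanced n f \<longrightarrow> (\<Prod>i<m. GPK_prob n m f (unit_vec i) 0) = 0)"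
proof (intro conjI impI)
  assume "is_constant n f"
  then obtain c where c: "\<forall>x<2^n. f x = c" by (auto simp: is_constant_def)
  from zero c have c0: "c = 0" by auto
  show "\<forall>i<m. GPK_prob n m f (unit_vec i) 0 = 1"
  proof (intro allI impI)
    fix i assume im: "i < m"
    have "(\<Sum>x<2^n. if bit (f x) i then -1 else (1::complex)) = (\<Sum>x<(2::nat)^n. 1)"
      using c c0 by (intro sum.cong) auto
    also have "\<dots> = (2::complex)^n" by simp
    finally have S: "(\<Sum>x<2^n. if bit (f x) i then -1 else (1::complex)) = 2^n" .
    have n2: "cmod ((2::complex)^n) = 2^n" by (simp add: norm_power)
    have "((2::real)^n)^2 = (2^2)^n" by (simp only: power_mult[symmetric] mult.commute)
    then have "((2::real)^n)^2 = 4^n" by simp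
    then show "GPK_prob n m f (unit_vec i) 0 = 1"
      by (simp add: prob[OF im range] S n2)
  qed
next
  assume "is_balanced n f"
  then obtain a b where ab: "a \<noteq> b" "f ` {..<2^n} = {a, b}"
      "2 * card {x. x < 2^n \<and> f x = a} = 2^n" "2 * card {x. x < 2^n \<and> f x = b} = 2^n"
    by (auto simp: is_balanced_def)
  obtain v where v: "f ` {..<(2::nat)^n} = {0, v}" "v \<noteq> 0"
      "2 * card {x. x < 2^n \<and> f x = 0} = 2^n" "2 * card {x. x < 2^n \<and> f x = v} = 2^n"
  proof (cases "a = 0")
    case True then show ?thesis using ab that[of b] by auto
  next
    case False then have b0: "b = 0" using zero ab by auto
    have "{a, b} = {0, a}" using b0 by blast
    then show ?thesis using ab that[of a] False b0 by simp
  qed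
  have "\<exists>i. bit v i"
  proof (rule ccontr)
    assume "\<not> (\<exists>i. bit v i)"
    then have "v = 0" by (auto intro: bit_eqI)
    with v(2) show False by simp
  qed
  then obtain i where bi: "bit v i" by blast
  have "v \<in> f ` {..<2^n}" using v(1) by auto
  then have "v < 2^m" using range by auto
  then have tv: "take_bit m v = v" by (simp add: take_bit_nat_eq_self_iff)
  have "bit (take_bit m v) i" using tv bi by simp
  then have im: "i < m" by (simp add: bit_take_bit_iff)
  have "GPK_prob n m f (unit_vec i) 0 = 0"
    using bal_sum[OF v bi] by (simp add: prob[OF im range])
  then show "(\<Prod>i<m. GPK_prob n m f (unit_vec i) 0) = 0"
    using im by (intro prod_zero) auto
qed

end
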